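(* If $a>b\geq c>d>0$, then $$\frac{L(a,b)}{L(c,d)}>1+\ln\frac{G(a,b)}{G(c,d)}>\frac{2ab}{ab+cd} \qquad\text{and}\qquad \frac{L(a,b)}{L(c,d)}>\frac{\ln\frac{G(a,b)}{G(c,d)}}{\ln\frac{I(a,b)}{I(c,d)}}.$$ In particular, if $a>b>0$, then $$\frac{L(a,b)}{b}>1+\frac{1}{2}\ln\frac{a}{b}>\frac{2a}{a+b}>\frac{\ln\frac{a}{b}}{2\ln\frac{I(a,b)}{b}}.$$
   Context: For $u,v>0$: $G(u,v)=\sqrt{uv}$; the logarithmic mean is $L(u,v)=\frac{u-v}{\ln u-\ln v}$ if $u\neq v$ and $L(u,u)=u$; the identric mean is $I(u,v)=\frac{1}{e}\left(\frac{u^u}{v^v}\right)^{1/(u-v)}$ if $u\neq v$ and $I(u,u)=u$. *)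

theory Defs
  imports Complex_Main
begin

definition G_mean :: "real \<Rightarrow> real \<Rightarrow> real" where
  "G_mean u v = sqrt (u * v)"

definition L_mean :: "real \<Rightarrow> real \<Rightarrow> real" where
  "L_mean u v = (if u \<noteq> v then (u - v) / (ln u - ln v) else u)"

definition I_mean :: "real \<Rightarrow> real \<Rightarrow> real" where
  "I_mean u v = (if u \<noteq> v
      then (1 / exp 1) * ((u powr u) / (v powr v)) powr (1 / (u - v))
      else u)"

end

theory Submission
  imports Defs
begin


lemma ln_lt1:
  fixes w :: real assumes "w > 1" shows "2 * ln w < w - 1/w"
proof -
  let ?f = "\<lambda>t::real. t - 1/t - 2 * ln t"
  have "?f 1 < ?f w"
  proof (rule DERIV_pos_imp_increasing_open[OF assms])
    fix x :: real assume x: "1 < x" "x < w"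
    have "DERIV ?f x :> 1 + 1/x^2 - 2/x"
      using x by (auto intro!: derivative_eq_intros simp: power2_eq_square field_simps)
    moreover have "1 + 1/x^2 - 2/x = (1 - 1/x)^2" using x by (simp add: power2_eq_square divide_simps) (simp add: algebra_simps)
    moreover have "(1 - 1/x)^2 > 0" using x by simp
    ultimately show "\<exists>y. DERIV ?f x :> y \<and> y > 0" by auto
  next
    show "continuous_on {1..w} ?f"
      by (intro continuous_intros) auto
  qed
  then show ?thesis by simp
qed

lemma ln_gt2:
  fixes v :: real assumes "v > 1" shows "2*(v-1)/(v+1) < ln v"
proof -
  let ?f = "\<lambda>t::real. ln t - 2*(t-1)/(t+1)"
  have "?f 1 < ?f v"
  proof (rule DERIV_pos_imp_increasing_open[OF assms])
    fix x :: real assume x: "1 < x" "x < v"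
    have "DERIV ?f x :> 1/x - 4/(x+1)^2"
      using x by (auto intro!: derivative_eq_intros simp: power2_eq_square field_simps)
    moreover have "1/x - 4/(x+1)^2 = (x-1)^2/(x*(x+1)^2)" using x by (simp add: power2_eq_square divide_simps) (simp add: algebra_simps)
    moreover have "(x-1)^2/(x*(x+1)^2) > 0" using x by simp
    ultimately show "\<exists>y. DERIV ?f x :> y \<and> y > 0" by auto
  next
    show "continuous_on {1..v} ?f"
      by (intro continuous_intros) auto
  qed
  then show ?thesis by simp
qed

lemma exp_gt:
  fixes y :: real assumes "y > 0" shows "1 + y + y^2/2 < exp y"
proof -
  let ?f = "\<lambda>t::real. exp t - 1 - t - t^2/2"
  have "?f 0 < ?f y"
  proof (rule DERIV_pos_imp_increasing_open[OF assms])
    fix x :: real assume x: "0 < x" "x < y"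
    have "DERIV ?f x :> exp x - 1 - x"
      by (auto intro!: derivative_eq_intros)
    moreover have "exp x - 1 - x > 0"
    proof -
      have "1 + x + x^2/2 \<le> exp x" using x by (intro exp_lower_Taylor_quadratic) simp
      moreover have "x^2/2 > 0" using x by simp
      ultimately show ?thesis by linarith
    qed
    ultimately show "\<exists>y. DERIV ?f x :> y \<and> y > 0" by auto
  next
    show "continuous_on {0..y} ?f"
      by (intro continuous_intros) auto
  qed
  then show ?thesis by simp
qed


lemma helpU:
  fixes u :: real assumes u: "u > 1" shows "u^2 - 1 \<le> 2 * u^2 * ln u"
proof -
  have "ln (1/u^2) \<le> 1/u^2 - 1" by (rule ln_le_minus_one) (use u in simp)
  moreover have "ln (1/u^2) = - 2 * ln u" using u by (simp add: ln_div ln_realpow)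
  ultimately have "- 2 * ln u * u^2 \<le> (1/u^2 - 1) * u^2" using u
    by (intro mult_right_mono) auto
  moreover have "(1/u^2 - 1) * u^2 = 1 - u^2" using u by (simp add: field_simps)
  ultimately show ?thesis by (simp add: algebra_simps)
qed

lemma coreA:
  fixes u E :: real assumes u: "u > 1" and E: "E \<ge> u"
  shows "1 + ln E \<le> E * (2*u*ln u/(u^2-1))"
proof -
  define k where "k = 2*u*ln u/(u^2-1)"
  have u2: "u^2 - 1 > 0" using one_less_power[OF u, of 2] by simp
  have lnu: "ln u > 0" using u by simp
  have "u^2 - 1 \<le> 2 * u^2 * ln u" by (rule helpU[OF u])
  hence uk: "u * k \<ge> 1" unfolding k_def using u2 by (simp add: field_simps power2_eq_square)
  have "2*(u^2-1)/(u^2+1) < ln (u^2)" by (rule ln_gt2) (use u2 in simp)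
  hence "2*(u^2-1)/(u^2+1) < 2 * ln u" using u by (simp add: ln_realpow)
  hence "2*(u^2-1) < 2 * ln u * (u^2+1)"
  proof -
    have pos: "0 < u^2+1" using u2 by linarith
    show ?thesis using \<open>2*(u^2-1)/(u^2+1) < 2 * ln u\<close> by (metis pos pos_divide_less_eq)
  qed
  hence "(u^2-1) < ln u * (u^2+1)" by simp
  hence "(u^2-1) * (1 + ln u) < 2*u^2*ln u" by (simp add: algebra_simps)
  hence h: "1 + ln u < u * k" unfolding k_def using u2 by (simp add: field_simps power2_eq_square)
  have "ln (E/u) \<le> E/u - 1" by (rule ln_le_minus_one) (use u E in simp)
  hence lnE: "ln E \<le> ln u + E/u - 1" using u E by (simp add: ln_div)
  have "E * (k - 1/u) \<ge> u * (k - 1/u)"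
    using E uk u by (intro mult_right_mono) (auto simp: field_simps)
  hence "E * k - E/u \<ge> u * k - 1" using u by (simp add: algebra_simps)
  thus ?thesis using lnE h unfolding k_def[symmetric] by linarith
qed

lemma coreC:
  fixes u E :: real assumes u: "u > 1" and E: "E \<ge> u"
  shows "ln E \<le> E * (2*u*ln u/(u^2-1)) * (ln E - ((u^2+1)*ln u/(u^2-1) - 1))"
proof -
  define k where "k = 2*u*ln u/(u^2-1)"
  define s where "s = ln u"
  define t where "t = ln E - s"
  define \<phi> where "\<phi> = (u^2+1)*ln u/(u^2-1) - 1"
  have u2: "u^2 - 1 > 0" using one_less_power[OF u, of 2] by simp
  have s0: "s > 0" using u s_def by simp
  have t0: "t \<ge> 0" using u E unfolding t_def s_def by simp
  have Eexp: "E = u * exp t" using u E unfolding t_def s_def by (simp add: exp_diff)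
  have k0: "k > 0" unfolding k_def using u2 s0 u s_def by simp
  have "ln (u^2) \<le> u^2 - 1" by (rule ln_le_minus_one) (use u in simp)
  hence "2 * s \<le> u^2 - 1" using u by (simp add: ln_realpow s_def)
  hence "2*s/(u^2-1) \<le> 1" using u2 by simp
  moreover have "s - \<phi> = 1 - 2*s/(u^2-1)" unfolding \<phi>_def s_def using u2 by (simp add: field_simps)
  ultimately have sphi: "s - \<phi> \<ge> 0" by linarith
  have "2 * ln (u^2) < u^2 - 1/u^2" by (rule ln_lt1) (use u2 in simp)
  hence "4 * s < u^2 - 1/u^2" using u by (simp add: ln_realpow s_def)
  hence "4 * s * u^2 < (u^2 - 1/u^2) * u^2" using u by (intro mult_strict_right_mono) auto
  moreover have "(u^2 - 1/u^2) * u^2 = u^4 - 1" using u by (simp add: field_simps power2_eq_square power4_eq_xxxx)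
  ultimately have key: "4 * s * u^2 < u^4 - 1" by simp
  have "u * k * (s - \<phi>) = 2*u^2*s/(u^2-1) * (1 - 2*s/(u^2-1))"
    unfolding k_def \<phi>_def s_def using u2 by (simp add: field_simps power2_eq_square)
  also have "\<dots> = s * (2*u^2*(u^2-1-2*s)/(u^2-1)^2)" using u2 by (simp add: field_simps power2_eq_square)
  also have "\<dots> \<ge> s"
  proof -
    have "2*u^2*(u^2-1-2*s) \<ge> (u^2-1)^2" using key by (simp add: algebra_simps power2_eq_square power4_eq_xxxx)
    hence "2*u^2*(u^2-1-2*s)/(u^2-1)^2 \<ge> 1" using u2 by simp
    hence "s * 1 \<le> s * (2*u^2*(u^2-1-2*s)/(u^2-1)^2)" using s0 by (intro mult_left_mono) auto
    thus ?thesis by simp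
  qed
  finally have b1: "u * k * (s - \<phi>) \<ge> s" .
  have "2 * ln (u) < u - 1/u" by (rule ln_lt1) (use u in simp)
  have "u^2 - 1 \<le> 2 * u^2 * s" unfolding s_def by (rule helpU[OF u])
  hence uk: "u * k \<ge> 1" unfolding k_def s_def using u2 by (simp add: field_simps power2_eq_square)
  have "exp t \<ge> 1 + t" by (rule exp_ge_add_one_self)
  have "s + t \<le> u*k*(s-\<phi>) + u*k*t + u*k*t*(s-\<phi>+t)"
  proof -
    have "u*k*t \<ge> t" using uk t0 by (simp add: mult_le_cancel_right1)
    moreover have "u*k*t*(s-\<phi>+t) \<ge> 0" using u k0 t0 sphi by simp
    ultimately show ?thesis using b1 by linarith
  qed
  also have "\<dots> = u * (1 + t) * k * (s - \<phi> + t)" by (simp add: algebra_simps)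
  also have "\<dots> \<le> E * k * (s - \<phi> + t)"
    using Eexp u k0 sphi t0 \<open>exp t \<ge> 1 + t\<close> by (intro mult_right_mono) auto
  finally have "s + t \<le> E * k * (s - \<phi> + t)" .
  thus ?thesis unfolding k_def[symmetric] \<phi>_def[symmetric] using t_def by (simp add: algebra_simps)
qed


lemma meansG:
  fixes u q :: real assumes u: "u > 1" and q: "q > 0"
  shows "G_mean (u^2*q) q = u*q"
proof -
  have "u^2*q*q = (u*q)^2" by (simp add: power2_eq_square)
  thus ?thesis using u q unfolding G_mean_def by simp
qed

lemma meansL:
  fixes u q :: real assumes u: "u > 1" and q: "q > 0"
  shows "L_mean (u^2*q) q = (u^2-1)*q/(2*ln u)"
proof -
  have u2: "u^2 > 1" using one_less_power[OF u, of 2] by simp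
  hence ne: "u^2*q \<noteq> q" using q by simp
  have "ln (u^2*q) - ln q = 2 * ln u" using u q by (simp add: ln_mult ln_realpow)
  thus ?thesis using ne unfolding L_mean_def by (simp add: algebra_simps)
qed

lemma meansI:
  fixes u q :: real assumes u: "u > 1" and q: "q > 0"
  shows "ln (I_mean (u^2*q) q) = 2*u^2*ln u/(u^2-1) + ln q - 1"
proof -
  have u2: "u^2 > 1" using one_less_power[OF u, of 2] by simp
  hence ne: "u^2*q \<noteq> q" using q by simp
  define p where "p = u^2*q"
  have "0 < u^2" using u2 by linarith
  hence p: "p > 0" unfolding p_def using q by (rule mult_pos_pos)
  have lnp: "ln p = 2 * ln u + ln q" using u q p_def by (simp add: ln_mult ln_realpow)
  have "ln (I_mean p q) = -1 + ln (((p powr p) / (q powr q)) powr (1 / (p - q)))"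
    using ne p q unfolding I_mean_def p_def[symmetric] by (simp add: ln_div)
  also have "\<dots> = -1 + (p * ln p - q * ln q) / (p - q)"
    using p q by (simp add: ln_div ln_inverse)
  also have "\<dots> = 2*u^2*ln u/(u^2-1) + ln q - 1"
  proof -
    have "p - q = (u^2-1)*q" unfolding p_def by (simp add: algebra_simps)
    moreover have "p * ln p - q * ln q = (u^2-1)*q*(2*u^2*ln u/(u^2-1) + ln q)"
      unfolding lnp using u2 by (simp add: p_def field_simps)
    ultimately show ?thesis using u2 q by simp
  qed
  finally show ?thesis unfolding p_def .
qed


lemma I_pos:
  fixes p q :: real assumes "p > 0" "q > 0" shows "I_mean p q > 0"
  using assms unfolding I_mean_def by auto

lemma part2:
  fixes a b :: real assumes ab: "a > b" and b: "b > 0"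
  shows "L_mean a b / b > 1 + (1/2) * ln (a / b)
          \<and> 1 + (1/2) * ln (a / b) > 2 * a / (a + b)
          \<and> 2 * a / (a + b) > ln (a / b) / (2 * ln (I_mean a b / b))"
proof -
  define u where "u = sqrt (a/b)"
  have "a/b > 1" using ab b by simp
  hence u: "u > 1" unfolding u_def by simp
  have a: "a = u^2 * b" unfolding u_def using ab b by simp
  define s where "s = ln u"
  define v where "v = u^2"
  have s0: "s > 0" using u s_def by simp
  have v1: "v > 1" unfolding v_def using one_less_power[OF u, of 2] by simp
  have lnab: "ln (a/b) = 2 * s" unfolding a s_def using b u by (simp add: ln_realpow)
  have L: "L_mean a b / b = (v-1)/(2*s)" unfolding a meansL[OF u b] s_def v_def using b by simp
  have Ib: "ln (I_mean a b / b) = 2*v*s/(v-1) - 1"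
    using meansI[OF u b] I_pos[of a b] ab b unfolding a[symmetric] s_def v_def by (simp add: ln_div)
  have vne: "1 + u^2 \<noteq> 0" "u^2 + 1 \<noteq> 0" using v1 unfolding v_def by auto
  have e1: "2*a = (2*v)*b" "a+b = (v+1)*b" unfolding a v_def by (simp_all add: algebra_simps)
  have ab2: "2 * a / (a + b) = 2*v/(v+1)" unfolding e1 using b by simp
  have gt2: "2*(v-1)/(v+1) < 2*s" using ln_gt2[OF v1] unfolding v_def s_def using u by (simp add: ln_realpow)
  hence gt2': "v - 1 < s * (v+1)" using v1 by (simp add: field_simps)
  have "1 + 2*s + (2*s)^2/2 < exp (2*s)" by (rule exp_gt) (use s0 in simp)
  moreover have "exp (2*s) = v"
  proof -
    have "2*s = ln v" unfolding s_def v_def using u by (simp add: ln_realpow)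
    thus ?thesis using v1 by simp
  qed
  ultimately have "2*s*(1+s) < v - 1" by (simp add: power2_eq_square algebra_simps)
  hence D: "L_mean a b / b > 1 + (1/2) * ln (a / b)" unfolding L lnab using s0 by (simp add: field_simps)
  have E: "1 + (1/2) * ln (a / b) > 2 * a / (a + b)" unfolding lnab ab2 using gt2' v1 by (simp add: field_simps)
  have M: "2*v*s/(v-1) - 1 > 0"
  proof -
    have "s*(v+1) \<le> s*(2*v)" using s0 v1 by (intro mult_left_mono) auto
    hence "v - 1 < 2*v*s" using gt2' by (simp add: algebra_simps)
    thus ?thesis using v1 by (simp add: field_simps)
  qed
  have "s*(v+1)*(3*v^2+1) > (v-1)*(3*v^2+1)" using gt2' v1 by (intro mult_strict_right_mono) (auto simp: add_pos_nonneg)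
  moreover have "(v-1)*(3*v^2+1) - 2*v*(v-1)*(v+1) = (v-1)^3" by (simp add: algebra_simps power2_eq_square power3_eq_cube)
  moreover have "(v-1)^3 > 0" using v1 by simp
  ultimately have "s*(v+1)*(3*v^2+1) > 2*v*(v-1)*(v+1)" by linarith
  moreover have "s*(v+1)*(3*v^2+1) = (s*(3*v^2+1))*(v+1)" "2*v*(v-1)*(v+1) = (2*v*(v-1))*(v+1)"
    by (simp_all add: algebra_simps)
  ultimately have "(s*(3*v^2+1))*(v+1) > (2*v*(v-1))*(v+1)" by simp
  hence key: "s*(3*v^2+1) > 2*v*(v-1)" using v1 by (simp add: mult_less_cancel_right)
  have "2*v*(2*v*s - (v-1)) - s*(v+1)*(v-1) = s*(3*v^2+1) - 2*v*(v-1)"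
    by (simp add: algebra_simps power2_eq_square)
  hence "2*v*(2*v*s - (v-1)) > s*(v+1)*(v-1)" using key by linarith
  moreover have "(2*v*s/(v-1) - 1)*(v-1) = 2*v*s - (v-1)" using v1 by (simp add: field_simps)
  ultimately have "(2*v*(2*v*s/(v-1) - 1))*(v-1) > (s*(v+1))*(v-1)" by (simp add: mult.assoc)
  hence X: "2*v*(2*v*s/(v-1) - 1) > s*(v+1)" using v1 by (simp add: mult_less_cancel_right)
  define X where "X = 2*v*s/(v-1) - 1"
  have X0: "X > 0" using M X_def by simp
  have vp: "v + 1 > 0" using v1 by simp
  have "s * (v+1) < 2*v*X" using X X_def by simp
  hence "s < 2*v*X/(v+1)" using vp by (simp add: pos_less_divide_eq)
  hence "s < (2*v/(v+1)) * X" by simp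
  hence "s / X < 2*v/(v+1)" using X0 by (simp add: pos_divide_less_eq)
  hence Fs: "2*v/(v+1) > s / (2*v*s/(v-1) - 1)" unfolding X_def .
  have eq: "(2*s)/(2*(2*v*s/(v-1) - 1)) = s/(2*v*s/(v-1) - 1)"
    by (rule mult_divide_mult_cancel_left) simp
  have F: "2 * a / (a + b) > ln (a / b) / (2 * ln (I_mean a b / b))" unfolding ab2 lnab Ib eq by (rule Fs)
  show ?thesis using D E F by blast
qed


lemma part1:
  fixes a b c d :: real assumes ab: "a > b" and bc: "b \<ge> c" and cd: "c > d" and d: "d > 0"
  shows "L_mean a b / L_mean c d > 1 + ln (G_mean a b / G_mean c d)
          \<and> 1 + ln (G_mean a b / G_mean c d) > 2 * a * b / (a * b + c * d)
          \<and> L_mean a b / L_mean c d >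
              ln (G_mean a b / G_mean c d) / ln (I_mean a b / I_mean c d)"
proof -
  have b: "b > 0" using bc cd d by linarith
  have c: "c > 0" using cd d by linarith
  define w where "w = sqrt (a/b)"
  define u where "u = sqrt (c/d)"
  have "a/b > 1" using ab b by simp
  hence w: "w > 1" unfolding w_def by simp
  have "c/d > 1" using cd d by simp
  hence u: "u > 1" unfolding u_def by simp
  have a: "a = w^2 * b" unfolding w_def using ab b by simp
  have cc: "c = u^2 * d" unfolding u_def using cd d by simp
  define s where "s = ln u"
  define lw where "lw = ln w"
  have s0: "s > 0" using u s_def by simp
  have lw0: "lw > 0" using w lw_def by simp
  have u2: "u^2 > 1" using one_less_power[OF u, of 2] by simp
  have w2: "w^2 > 1" using one_less_power[OF w, of 2] by simp
  have G1: "G_mean a b = w*b" unfolding a by (rule meansG[OF w b])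
  have G2: "G_mean c d = u*d" unfolding cc by (rule meansG[OF u d])
  have L1: "L_mean a b = (w^2-1)*b/(2*lw)" unfolding a lw_def by (rule meansL[OF w b])
  have L2: "L_mean c d = (u^2-1)*d/(2*s)" unfolding cc s_def by (rule meansL[OF u d])
  define E where "E = (w*b)/(u*d)"
  define k where "k = 2*u*s/(u^2-1)"
  have GG: "G_mean a b / G_mean c d = E" unfolding G1 G2 E_def ..
  have "u^2 * d \<le> b" using bc cc by simp
  also have "b < w * b" using w b by simp
  finally have "u * (u * d) < w * b" by (simp add: power2_eq_square algebra_simps)
  hence Eu: "E > u" unfolding E_def using u d by (simp add: field_simps)
  have E0: "E > 0" using Eu u by linarith
  have k0: "k > 0" unfolding k_def using u u2 s0 by simp
  have L2pos: "L_mean c d > 0" unfolding L2 using u2 d s0 by simp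
  have GL: "G_mean c d / L_mean c d = k" unfolding G2 L2 k_def using u2 d s0 by (simp add: field_simps)
  have "2 * lw < w - 1/w" unfolding lw_def by (rule ln_lt1[OF w])
  hence "2 * lw * w < (w - 1/w) * w" using w by (intro mult_strict_right_mono) auto
  hence "2 * w * lw < w^2 - 1" using w by (simp add: algebra_simps power2_eq_square)
  hence "(2 * w * lw) * b < (w^2 - 1) * b" using b by (intro mult_strict_right_mono)
  hence "(w * b) * (2*lw) < (w^2-1)*b" by (simp add: algebra_simps)
  hence "w * b < (w^2-1)*b/(2*lw)" using lw0 by (simp add: pos_less_divide_eq)
  hence LG: "G_mean a b < L_mean a b" unfolding G1 L1 .
  have "E * k = G_mean a b / L_mean c d" unfolding GG[symmetric] GL[symmetric] using L2pos G2 u d by simp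
  also have "\<dots> < L_mean a b / L_mean c d" using LG L2pos by (simp add: divide_strict_right_mono)
  finally have rEk: "E * k < L_mean a b / L_mean c d" .
  have A: "1 + ln E \<le> E * k" unfolding k_def s_def by (rule coreA[OF u]) (use Eu in simp)
  have E2: "E^2 > 1" using one_less_power[of E 2] Eu u by simp
  have "2*(E^2-1)/(E^2+1) < ln (E^2)" by (rule ln_gt2[OF E2])
  hence "2*(E^2-1)/(E^2+1) < 2 * ln E" using E0 by (simp add: ln_realpow)
  hence "E^2-1 < ln E * (E^2+1)" using E2 by (simp add: field_simps)
  hence "2*E^2 < (1 + ln E) * (E^2+1)" by (simp add: algebra_simps)
  hence B0: "2*E^2/(E^2+1) < 1 + ln E" using E2 by (simp add: field_simps)
  have "a*b = E^2 * (c*d)" unfolding E_def a cc using u d by (simp add: field_simps power2_eq_square)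
  hence "2*a*b/(a*b+c*d) = (2*E^2)*(c*d)/((E^2+1)*(c*d))" by (simp add: algebra_simps)
  also have "\<dots> = 2*E^2/(E^2+1)" using c d by simp
  finally have B: "2*a*b/(a*b+c*d) < 1 + ln E" using B0 by simp
  define \<phi>u where "\<phi>u = (u^2+1)*s/(u^2-1) - 1"
  define \<phi>w where "\<phi>w = (w^2+1)*lw/(w^2-1) - 1"
  have "2*(w^2-1)/(w^2+1) < ln (w^2)" by (rule ln_gt2[OF w2])
  hence "2*(w^2-1)/(w^2+1) < 2 * lw" using w by (simp add: ln_realpow lw_def)
  hence "w^2-1 < lw * (w^2+1)" using w2 by (simp add: field_simps)
  hence \<phi>w0: "\<phi>w \<ge> 0" unfolding \<phi>w_def using w2 by (simp add: field_simps)
  have lnE: "ln E = lw + ln b - s - ln d" unfolding E_def lw_def s_def using w b u d by (simp add: ln_div ln_mult)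
  have I1: "ln (I_mean a b) = 2*w^2*lw/(w^2-1) + ln b - 1" unfolding a lw_def by (rule meansI[OF w b])
  have I2: "ln (I_mean c d) = 2*u^2*s/(u^2-1) + ln d - 1" unfolding cc s_def by (rule meansI[OF u d])
  have "ln (I_mean a b / I_mean c d) = ln (I_mean a b) - ln (I_mean c d)"
    using I_pos[of a b] I_pos[of c d] ab b c d by (simp add: ln_div)
  also have "\<dots> = ln E - \<phi>u + \<phi>w" unfolding I1 I2 lnE \<phi>u_def \<phi>w_def using u2 w2
    by (simp add: field_simps)
  finally have J: "ln (I_mean a b / I_mean c d) = ln E - \<phi>u + \<phi>w" .
  have C0: "ln E \<le> E * k * (ln E - \<phi>u)" unfolding k_def \<phi>u_def s_def by (rule coreC[OF u]) (use Eu in simp)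
  have lnE0: "ln E > 0" using Eu u by simp
  have Ek0: "E * k > 0" using E0 k0 by simp
  have "ln E - \<phi>u > 0"
  proof (rule ccontr)
    assume "\<not> ln E - \<phi>u > 0"
    hence "E * k * (ln E - \<phi>u) \<le> 0" using Ek0 by (simp add: mult_nonneg_nonpos)
    thus False using C0 lnE0 by linarith
  qed
  define J where "J = ln E - \<phi>u + \<phi>w"
  have J0: "J > 0" unfolding J_def using \<open>ln E - \<phi>u > 0\<close> \<phi>w0 by linarith
  have "ln E \<le> E * k * (ln E - \<phi>u)" by (rule C0)
  also have "\<dots> \<le> E * k * J" unfolding J_def using Ek0 \<phi>w0 by (intro mult_left_mono) auto
  also have "\<dots> < (L_mean a b / L_mean c d) * J" using rEk J0 by (intro mult_strict_right_mono)
  finally have "ln E < (L_mean a b / L_mean c d) * J" .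
  hence C: "ln E / J < L_mean a b / L_mean c d" using J0 by (simp add: divide_less_eq)
  show ?thesis unfolding GG J using A rEk B C J_def by simp
qed


theorem theorem3p2:
  shows "(\<forall>a b c d :: real. a > b \<and> b \<ge> c \<and> c > d \<and> d > 0 \<longrightarrow>
            L_mean a b / L_mean c d > 1 + ln (G_mean a b / G_mean c d)
          \<and> 1 + ln (G_mean a b / G_mean c d) > 2 * a * b / (a * b + c * d)
          \<and> L_mean a b / L_mean c d >
              ln (G_mean a b / G_mean c d) / ln (I_mean a b / I_mean c d))
       \<and> (\<forall>a b :: real. a > b \<and> b > 0 \<longrightarrow>
            L_mean a b / b > 1 + (1/2) * ln (a / b)
          \<and> 1 + (1/2) * ln (a / b) > 2 * a / (a + b)
          \<and> 2 * a / (a + b) > ln (a / b) / (2 * ln (I_mean a b / b)))"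
  proof (rule conjI)
  show "\<forall>a b c d :: real. a > b \<and> b \<ge> c \<and> c > d \<and> d > 0 \<longrightarrow>
            L_mean a b / L_mean c d > 1 + ln (G_mean a b / G_mean c d)
          \<and> 1 + ln (G_mean a b / G_mean c d) > 2 * a * b / (a * b + c * d)
          \<and> L_mean a b / L_mean c d >
              ln (G_mean a b / G_mean c d) / ln (I_mean a b / I_mean c d)"
    by (intro allI impI) (elim conjE, rule part1; assumption)
  show "\<forall>a b :: real. a > b \<and> b > 0 \<longrightarrow>
            L_mean a b / b > 1 + (1/2) * ln (a / b)
          \<and> 1 + (1/2) * ln (a / b) > 2 * a / (a + b)
          \<and> 2 * a / (a + b) > ln (a / b) / (2 * ln (I_mean a b / b))"
    by (intro allI impI) (elim conjE, rule part2; assumption)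
qed

end
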